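(* Let $n$ be an odd positive integer. Then $d_{\mathrm{GED}}(T_{\mathrm{ord}}, T_{\mathrm{rps}}) = \frac{1}{8}(n^2-1)$, where $T_{\mathrm{ord}}$ and $T_{\mathrm{rps}}$ are the ordered and rock-paper-scissors tournaments on $n$ players defined below.
   Context: A tournament on a finite set $V$ of players is a directed graph with vertex set $V$ such that for every two distinct vertices $u,v$ there is exactly one of the edges $(u,v)$, $(v,u)$; the edge $(u,v)$ means that $u$ beats $v$. Two tournaments $(V_1,E_1)$ and $(V_2,E_2)$ are isomorphic if there is a bijection $\pi\colon V_1\to V_2$ with $(u,v)\in E_1$ iff $(\pi(u),\pi(v))\in E_2$. For tournaments $T_1,T_2$ on the same number of players, the graph edit distance $d_{\mathrm{GED}}(T_1,T_2)$ is the minimum number of edges of $T_1$ whose orientation must be reversed so that the resulting tournament is isomorphic to $T_2$. The ordered tournament $T_{\mathrm{ord}}$ on $n$ players is the transitive tournament: the players are $v_1,\dots,v_n$ and $v_i$ beats $v_j$ whenever $i<j$. The tournament $T_{\mathrm{rps}}$ on $n$ players has players $v_0,\dots,v_{n-1}$ and, for each $i\in\{0,\dots,n-1\}$, edges from $v_i$ to each of $v_{(i+1)\bmod n},\dots,v_{(i+\lfloor n/2\rfloor)\bmod n}$ (for odd $n$ this is well defined and every player beats exactly $(n-1)/2$ others). *)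

theory Defs
  imports Main
begin

text \<open>A tournament is a pair (V, E) with E a set of directed edges: (u,v) in E means u beats v.\<close>

definition tournament :: "'a set \<Rightarrow> ('a \<times> 'a) set \<Rightarrow> bool" where
  "tournament V E \<longleftrightarrow> finite V \<and> E \<subseteq> V \<times> V \<and>
     (\<forall>u\<in>V. \<forall>v\<in>V. u \<noteq> v \<longrightarrow> ((u, v) \<in> E \<longleftrightarrow> (v, u) \<notin> E)) \<and>
     (\<forall>u\<in>V. (u, u) \<notin> E)"

definition tourn_iso :: "'a set \<Rightarrow> ('a \<times> 'a) set \<Rightarrow> 'b set \<Rightarrow> ('b \<times> 'b) set \<Rightarrow> bool" where
  "tourn_iso V1 E1 V2 E2 \<longleftrightarrow> (\<exists>\<pi>. bij_betw \<pi> V1 V2 \<and>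
     (\<forall>u\<in>V1. \<forall>v\<in>V1. (u, v) \<in> E1 \<longleftrightarrow> (\<pi> u, \<pi> v) \<in> E2))"

definition reverse_edges :: "('a \<times> 'a) set \<Rightarrow> ('a \<times> 'a) set \<Rightarrow> ('a \<times> 'a) set" where
  "reverse_edges E F = (E - F) \<union> F\<inverse>"

definition d_GED :: "'a set \<Rightarrow> ('a \<times> 'a) set \<Rightarrow> 'b set \<Rightarrow> ('b \<times> 'b) set \<Rightarrow> nat" where
  "d_GED V1 E1 V2 E2 = (LEAST k. \<exists>F. F \<subseteq> E1 \<and> card F = k \<and>
      tourn_iso V1 (reverse_edges E1 F) V2 E2)"

text \<open>Ordered (transitive) tournament on players v_1..v_n, represented by 1..n.\<close>
definition T_ord_V :: "nat \<Rightarrow> nat set" where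
  "T_ord_V n = {1..n}"
definition T_ord_E :: "nat \<Rightarrow> (nat \<times> nat) set" where
  "T_ord_E n = {(i, j). i \<in> {1..n} \<and> j \<in> {1..n} \<and> i < j}"

text \<open>Rock-paper-scissors tournament on players v_0..v_{n-1}, represented by 0..n-1:
  v_i beats v_{(i+k) mod n} for k = 1..floor(n/2).\<close>
definition T_rps_V :: "nat \<Rightarrow> nat set" where
  "T_rps_V n = {0..<n}"
definition T_rps_E :: "nat \<Rightarrow> (nat \<times> nat) set" where
  "T_rps_E n = {(i, (i + k) mod n) | i k. i < n \<and> 1 \<le> k \<and> k \<le> n div 2}"

end

theory Submission
  imports Defs
begin

lemma gs: "2 * (\<Sum>i\<in>{1..m}. m + 1 - i) = m * (m + 1::nat)"
proof -
  have "(\<Sum>i\<in>{1..m}. m + 1 - i) = (\<Sum>i\<in>{1..m}. i)"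
    by (rule sum.reindex_bij_witness[where i="\<lambda>i. m+1-i" and j="\<lambda>i. m+1-i"]) auto
  then show ?thesis using double_gauss_sum_from_Suc_0[of m, where 'a=nat] by simp
qed

lemma rps_char:
  assumes "a < 2*m+1" "b < 2*m+1"
  shows "(a,b) \<in> T_rps_E (2*m+1) \<longleftrightarrow> (a<b \<and> b \<le> a+m) \<or> (b<a \<and> b+m < a)"
proof
  assume "(a,b) \<in> T_rps_E (2*m+1)"
  then obtain k where k: "b = (a+k) mod (2*m+1)" "1 \<le> k" "k \<le> m"
    unfolding T_rps_E_def by auto
  show "(a<b \<and> b \<le> a+m) \<or> (b<a \<and> b+m < a)"
  proof (cases "a + k < 2*m+1")
    case True
    then have "b = a + k" using k by simp
    then show ?thesis using k by simp
  next
    case False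
    then have "b = a + k - (2*m+1)" using k assms by (simp add: mod_if)
    then show ?thesis using k assms False by arith
  qed
next
  assume h: "(a<b \<and> b \<le> a+m) \<or> (b<a \<and> b+m < a)"
  show "(a,b) \<in> T_rps_E (2*m+1)"
  proof (cases "a < b")
    case True
    then have "b = (a + (b-a)) mod (2*m+1)" "1 \<le> b-a" "b - a \<le> (2*m+1) div 2"
      using h assms by auto
    then show ?thesis unfolding T_rps_E_def using assms by blast
  next
    case False
    have bb: "(b + (2*m+1)) mod (2*m+1) = b" using assms by (metis mod_add_self2 mod_less)
    have "a + (b+(2*m+1)-a) = b + (2*m+1)" using assms by simp
    then have "b = (a + (b+(2*m+1)-a)) mod (2*m+1)" using bb by simp
    moreover have "1 \<le> b+(2*m+1)-a" "b+(2*m+1)-a \<le> (2*m+1) div 2"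
      using h assms False by auto
    ultimately show ?thesis unfolding T_rps_E_def using assms by blast
  qed
qed

lemma rps_out:
  assumes "a < 2*m+1"
  shows "card {b\<in>{0..<2*m+1}. (a,b) \<in> T_rps_E (2*m+1)} = m"
proof -
  have "{b\<in>{0..<2*m+1}. (a,b) \<in> T_rps_E (2*m+1)} = (\<lambda>k. (a+k) mod (2*m+1)) ` {1..m}"
    unfolding T_rps_E_def using assms by auto
  moreover have "inj_on (\<lambda>k. (a+k) mod (2*m+1)) {1..m}"
  proof (rule inj_onI)
    fix x y assume xy: "x \<in> {1..m}" "y \<in> {1..m}" "(a+x) mod (2*m+1) = (a+y) mod (2*m+1)"
    then show "x = y" using assms
      by (auto simp: mod_if split: if_splits)
  qed
  ultimately show ?thesis by (simp add: card_image)
qed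

lemma lower:
  fixes m :: nat and \<pi> :: "nat \<Rightarrow> nat"
  defines "n \<equiv> 2*m+1"
  assumes F: "F \<subseteq> T_ord_E n"
    and bij: "bij_betw \<pi> {1..n} {0..<n}"
    and iso: "\<forall>u\<in>{1..n}. \<forall>v\<in>{1..n}. (u,v) \<in> reverse_edges (T_ord_E n) F \<longleftrightarrow> (\<pi> u, \<pi> v) \<in> T_rps_E n"
  shows "m * (m+1) \<le> 2 * card F"
proof -
  define V where "V = {1..n}"
  define E' where "E' = reverse_edges (T_ord_E n) F"
  define A where "A = {1..m}"
  define B where "B = {m+1..n}"
  have AV: "A \<subseteq> V" and BV: "B \<subseteq> V" unfolding A_def B_def V_def n_def by auto
  have pi_in: "\<pi> u < n" if "u \<in> V" for u using bij_betw_apply[OF bij] that unfolding V_def by auto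
  have pi_inj: "\<pi> u = \<pi> v \<Longrightarrow> u \<in> V \<Longrightarrow> v \<in> V \<Longrightarrow> u = v" for u v
    using bij_betw_imp_inj_on[OF bij] unfolding V_def by (meson inj_onD)
  have iso': "(u,v) \<in> E' \<longleftrightarrow> (\<pi> u, \<pi> v) \<in> T_rps_E n" if "u \<in> V" "v \<in> V" for u v
    using iso that unfolding E'_def V_def by blast
  have tour: "(u,v) \<in> E' \<longleftrightarrow> (v,u) \<notin> E'" if "u \<in> V" "v \<in> V" "u \<noteq> v" for u v
  proof -
    have ne: "\<pi> u \<noteq> \<pi> v" using pi_inj that by blast
    have a: "\<pi> u < 2*m+1" "\<pi> v < 2*m+1" using pi_in that unfolding n_def by auto
    have "(\<pi> u, \<pi> v) \<in> T_rps_E (2*m+1) \<longleftrightarrow> (\<pi> v, \<pi> u) \<notin> T_rps_E (2*m+1)"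
      unfolding rps_char[OF a] rps_char[OF a(2,1)] using ne by arith
    then show ?thesis using iso'[OF that(1,2)] iso'[OF that(2,1)] unfolding n_def by blast
  qed
  have outdeg: "card {v\<in>V. (u,v) \<in> E'} = m" if "u \<in> V" for u
  proof -
    have "{v\<in>V. (u,v) \<in> E'} = {v\<in>V. (\<pi> u, \<pi> v) \<in> T_rps_E n}" using iso' that by auto
    moreover have "\<pi> ` {v\<in>V. (\<pi> u, \<pi> v) \<in> T_rps_E n} = {b\<in>{0..<n}. (\<pi> u, b) \<in> T_rps_E n}"
    proof -
      have "\<pi> ` {v\<in>V. (\<pi> u, \<pi> v) \<in> T_rps_E n} = {b\<in>\<pi> ` V. (\<pi> u, b) \<in> T_rps_E n}" by blast
      then show ?thesis using bij unfolding V_def bij_betw_def by simp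
    qed
    moreover have "inj_on \<pi> {v\<in>V. (\<pi> u, \<pi> v) \<in> T_rps_E n}"
      using pi_inj by (auto simp: inj_on_def)
    ultimately have "card {v\<in>V. (u,v) \<in> E'} = card {b\<in>{0..<n}. (\<pi> u, b) \<in> T_rps_E n}"
      using card_image by fastforce
    also have "\<dots> = m" using rps_out[of "\<pi> u" m] pi_in[OF that] unfolding n_def by simp
    finally show ?thesis .
  qed
  define S where "S = Sigma A (\<lambda>u. {v\<in>V. (u,v) \<in> E'})"
  have cS: "card S = m * m"
  proof -
    have "card S = (\<Sum>u\<in>A. card {v\<in>V. (u,v) \<in> E'})"
      unfolding S_def by (simp add: A_def V_def)
    also have "\<dots> = (\<Sum>u\<in>A. m)" using outdeg AV by (intro sum.cong) auto
    finally show ?thesis by (simp add: A_def)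
  qed
  define I where "I = {(u,v). u \<in> A \<and> v \<in> A \<and> (u,v) \<in> E'}"
  define C where "C = {(u,v). u \<in> A \<and> v \<in> B \<and> (u,v) \<in> E'}"
  have finI: "finite I" unfolding I_def by (rule finite_subset[of _ "A \<times> A"]) (auto simp: A_def)
  have finC: "finite C" unfolding C_def by (rule finite_subset[of _ "A \<times> B"]) (auto simp: B_def A_def)
  have VAB: "V = A \<union> B" unfolding V_def A_def B_def n_def by auto
  have "S = I \<union> C" unfolding S_def I_def C_def using VAB AV BV by auto
  moreover have "I \<inter> C = {}" unfolding I_def C_def A_def B_def by auto
  ultimately have SIC: "card S = card I + card C" using finI finC card_Un_disjoint by metis
  define D where "D = {(u,v). u \<in> A \<and> v \<in> A \<and> u \<noteq> v}"
  have irr: "(u,u) \<notin> E'" if "u \<in> V" for u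
  proof -
    have a: "\<pi> u < 2*m+1" using pi_in that unfolding n_def by auto
    show ?thesis using iso'[OF that that] rps_char[OF a a] unfolding n_def by simp
  qed
  have "D \<subseteq> I \<union> I\<inverse>"
  proof
    fix x assume "x \<in> D"
    then obtain u v where uv: "x = (u,v)" "u \<in> A" "v \<in> A" "u \<noteq> v" unfolding D_def by blast
    then have "u \<in> V" "v \<in> V" using AV by auto
    then have "(u,v) \<in> E' \<or> (v,u) \<in> E'" using tour uv(4) by blast
    then show "x \<in> I \<union> I\<inverse>" using uv unfolding I_def by blast
  qed
  moreover have "I \<union> I\<inverse> \<subseteq> D"
  proof
    fix x assume "x \<in> I \<union> I\<inverse>"
    then obtain u v where uv: "x = (u,v)" "u \<in> A" "v \<in> A" "(u,v) \<in> E' \<or> (v,u) \<in> E'" unfolding I_def by blast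
    then have "u \<in> V" "v \<in> V" using AV by auto
    then have "u \<noteq> v" using irr uv(4) by blast
    then show "x \<in> D" using uv unfolding D_def by blast
  qed
  ultimately have "D = I \<union> I\<inverse>" by blast
  moreover have "I \<inter> I\<inverse> = {}"
  proof -
    have "False" if "(u,v) \<in> I" "(v,u) \<in> I" for u v
    proof -
      have uv: "u \<in> V" "v \<in> V" "(u,v) \<in> E'" "(v,u) \<in> E'" using that AV unfolding I_def by auto
      show False using tour[OF uv(1,2)] irr[OF uv(1)] uv(3,4) by blast
    qed
    then show ?thesis by auto
  qed
  moreover have "card (I\<inverse>) = card I"
  proof -
    have "I\<inverse> = (\<lambda>(a,b). (b,a)) ` I" by auto
    then show ?thesis using card_image[OF swap_inj_on[of I]] by simp
  qed
  ultimately have cD: "card D = 2 * card I" using finI card_Un_disjoint[of I "I\<inverse>"] by simp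
  have "D = (A \<times> A) - (\<lambda>x. (x,x)) ` A" unfolding D_def by auto
  moreover have "card ((\<lambda>x. (x,x)) ` A) = m" by (simp add: card_image inj_on_def A_def)
  moreover have sub: "(\<lambda>x. (x,x)) ` A \<subseteq> A \<times> A" by auto
  moreover have "finite ((\<lambda>x. (x,x)) ` A)" by (simp add: A_def)
  moreover have "card (A \<times> A) = m * m" by (simp add: A_def card_cartesian_product)
  ultimately have "card D = m * m - m"
    using card_Diff_subset by metis
  then have cI: "2 * card I = m * m - m" using cD by simp
  have "A \<times> B - C \<subseteq> F"
  proof
    fix x assume x: "x \<in> A \<times> B - C"
    then obtain u v where uv: "x = (u,v)" "u \<in> A" "v \<in> B" "(u,v) \<notin> E'" unfolding C_def by auto
    have "(u,v) \<in> T_ord_E n" using uv unfolding T_ord_E_def A_def B_def n_def by auto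
    then show "x \<in> F" using uv unfolding E'_def reverse_edges_def by auto
  qed
  then have "card (A \<times> B - C) \<le> card F"
  proof -
    have "finite (T_ord_E n)" by (rule finite_subset[of _ "{1..n}\<times>{1..n}"]) (auto simp: T_ord_E_def)
    then have "finite F" using F finite_subset by blast
    then show ?thesis using card_mono \<open>A \<times> B - C \<subseteq> F\<close> by blast
  qed
  moreover have "card (A \<times> B - C) = card (A \<times> B) - card C"
    by (rule card_Diff_subset) (auto simp: C_def finC[unfolded C_def])
  moreover have "card (A \<times> B) = m * (m+1)" by (simp add: A_def B_def n_def card_cartesian_product)
  ultimately have "m * (m+1) - card C \<le> card F" by simp
  moreover have "card C = m * m - card I" using SIC cS by simp
  ultimately show ?thesis using cI
    by (simp add: algebra_simps)
qed

lemma upper_iso: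
  fixes m :: nat
  defines "n \<equiv> 2*m+1"
  assumes "u \<in> {1..n}" "v \<in> {1..n}"
  shows "(u,v) \<in> reverse_edges (T_ord_E n) {(i,j). i \<in> {1..n} \<and> j \<in> {1..n} \<and> i + m < j}
    \<longleftrightarrow> (u - 1, v - 1) \<in> T_rps_E n"
proof -
  have a: "u - 1 < 2*m+1" "v - 1 < 2*m+1" using assms by auto
  show ?thesis unfolding n_def rps_char[OF a] reverse_edges_def T_ord_E_def
    using assms unfolding n_def by auto
qed

theorem proposition1:
  fixes n :: nat
  assumes "odd n" and "n > 0"
  shows "8 * d_GED (T_ord_V n) (T_ord_E n) (T_rps_V n) (T_rps_E n) = n ^ 2 - 1"
proof -
  obtain m where n: "n = 2*m+1" using assms(1) oddE by blast
  define P where "P k \<longleftrightarrow> (\<exists>F. F \<subseteq> T_ord_E n \<and> card F = k \<and>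
      tourn_iso (T_ord_V n) (reverse_edges (T_ord_E n) F) (T_rps_V n) (T_rps_E n))" for k
  have d: "d_GED (T_ord_V n) (T_ord_E n) (T_rps_V n) (T_rps_E n) = Least P"
    unfolding d_GED_def P_def by simp
  define F0 where "F0 = {(i,j). i \<in> {1..n} \<and> j \<in> {1..n} \<and> i + m < j}"
  have F0sub: "F0 \<subseteq> T_ord_E n" unfolding F0_def T_ord_E_def by auto
  have cF0: "2 * card F0 = m * (m+1)"
  proof -
    have "F0 = Sigma {1..m} (\<lambda>i. {i+m+1..n})" unfolding F0_def n by auto
    then have "card F0 = (\<Sum>i\<in>{1..m}. card {i+m+1..n})" by simp
    also have "\<dots> = (\<Sum>i\<in>{1..m}. m + 1 - i)" unfolding n by (intro sum.cong) auto
    finally show ?thesis using gs by simp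
  qed
  have "tourn_iso (T_ord_V n) (reverse_edges (T_ord_E n) F0) (T_rps_V n) (T_rps_E n)"
    unfolding tourn_iso_def T_ord_V_def T_rps_V_def
  proof (intro exI conjI)
    show "bij_betw (\<lambda>i. i - 1) {1..n} {0..<n}"
      by (rule bij_betw_byWitness[where f'=Suc]) auto
    show "\<forall>u\<in>{1..n}. \<forall>v\<in>{1..n}. ((u, v) \<in> reverse_edges (T_ord_E n) F0) = ((u - 1, v - 1) \<in> T_rps_E n)"
      unfolding F0_def n using upper_iso[of _ m] by blast
  qed
  then have P0: "P (card F0)" unfolding P_def using F0sub by blast
  then have le: "Least P \<le> card F0" by (rule Least_le)
  have "P (Least P)" using P0 by (rule LeastI)
  then obtain F \<pi> where F: "F \<subseteq> T_ord_E n" "card F = Least P"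
    "bij_betw \<pi> {1..n} {0..<n}"
    "\<forall>u\<in>{1..n}. \<forall>v\<in>{1..n}. (u,v) \<in> reverse_edges (T_ord_E n) F \<longleftrightarrow> (\<pi> u, \<pi> v) \<in> T_rps_E n"
    unfolding P_def tourn_iso_def T_ord_V_def T_rps_V_def by blast
  have "m * (m+1) \<le> 2 * Least P" using lower[of F m \<pi>] F unfolding n by simp
  then have "2 * Least P = m * (m+1)" using le cF0 by simp
  then have "8 * Least P = 4 * (m * (m+1))" by simp
  moreover have "n ^ 2 - 1 = 4 * (m * (m+1))" unfolding n by (simp add: power2_eq_square algebra_simps)
  ultimately show ?thesis using d by simp
qed

end
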